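(* Let $Q=[u_1,\dots,u_n]\subset\mathbb{S}^2$ with $n\ge 6$ be a spherical polygon not contained in any closed hemisphere, without self-intersections and antipodal intersections, with exactly two essential vertices. Then the two essential vertices are not consecutive in $Q$.
   Context: A spherical polygon has edges the minimal great-circle arcs between consecutive vertices (indices mod $n$); no three vertices lie on a common great circle. A set is balanced if not contained in any closed hemisphere; for balanced $Q$, $u_m$ is essential if the vertex set minus $u_m$ is not balanced. Self-intersection: two non-adjacent edges intersect; antipodal intersection: non-adjacent edges $e,f$ with $e\cap(-f)\neq\emptyset$. *)

theory Defs
  imports "HOL-Analysis.Analysis"
begin

type_synonym pt = "real^3"

text \<open>Minimal great-circle arc between two non-antipodal unit vectors a, b:
  the unit vectors in the convex cone spanned by a and b.\<close>
definition sph_arc :: "pt \<Rightarrow> pt \<Rightarrow> pt set" where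
  "sph_arc a b = {x. norm x = 1 \<and> (\<exists>s t. s \<ge> 0 \<and> t \<ge> 0 \<and> x = s *\<^sub>R a + t *\<^sub>R b)}"

definition closed_hemisphere :: "pt \<Rightarrow> pt set" where
  "closed_hemisphere v = {x. norm x = 1 \<and> v \<bullet> x \<ge> 0}"

definition in_closed_hemisphere :: "pt set \<Rightarrow> bool" where
  "in_closed_hemisphere S \<longleftrightarrow> (\<exists>v. v \<noteq> 0 \<and> S \<subseteq> closed_hemisphere v)"

definition balanced :: "pt set \<Rightarrow> bool" where
  "balanced S \<longleftrightarrow> \<not> in_closed_hemisphere S"

text \<open>A spherical polygon [u_0,...,u_{n-1}] is given by u :: nat => pt and n;
  indices are taken mod n.\<close>
definition vertex_set :: "(nat \<Rightarrow> pt) \<Rightarrow> nat \<Rightarrow> pt set" where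
  "vertex_set u n = u ` {..<n}"

definition edge :: "(nat \<Rightarrow> pt) \<Rightarrow> nat \<Rightarrow> nat \<Rightarrow> pt set" where
  "edge u n i = sph_arc (u (i mod n)) (u (Suc i mod n))"

definition spherical_polygon :: "(nat \<Rightarrow> pt) \<Rightarrow> nat \<Rightarrow> bool" where
  "spherical_polygon u n \<longleftrightarrow> n \<ge> 3 \<and> (\<forall>i<n. norm (u i) = 1) \<and>
     (\<forall>i<n. \<forall>j<n. \<forall>k<n. i \<noteq> j \<and> j \<noteq> k \<and> i \<noteq> k \<longrightarrow>
        \<not> (\<exists>v. v \<noteq> 0 \<and> v \<bullet> u i = 0 \<and> v \<bullet> u j = 0 \<and> v \<bullet> u k = 0))"

definition nonadjacent_edges :: "nat \<Rightarrow> nat \<Rightarrow> nat \<Rightarrow> bool" where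
  "nonadjacent_edges n i j \<longleftrightarrow> i < n \<and> j < n \<and> i \<noteq> j \<and> j \<noteq> Suc i mod n \<and> i \<noteq> Suc j mod n"

definition self_intersecting :: "(nat \<Rightarrow> pt) \<Rightarrow> nat \<Rightarrow> bool" where
  "self_intersecting u n \<longleftrightarrow>
     (\<exists>i j. nonadjacent_edges n i j \<and> edge u n i \<inter> edge u n j \<noteq> {})"

definition antipodal_intersecting :: "(nat \<Rightarrow> pt) \<Rightarrow> nat \<Rightarrow> bool" where
  "antipodal_intersecting u n \<longleftrightarrow>
     (\<exists>i j. nonadjacent_edges n i j \<and> edge u n i \<inter> uminus ` edge u n j \<noteq> {})"

definition essential :: "(nat \<Rightarrow> pt) \<Rightarrow> nat \<Rightarrow> nat \<Rightarrow> bool" where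
  "essential u n m \<longleftrightarrow> m < n \<and> \<not> balanced (vertex_set u n - {u m})"

end

theory Submission
  imports Defs
begin

lemma decomp_id: fixes a b q :: "real^3"
  shows "((cross3 a b) \<bullet> (cross3 a b)) *\<^sub>R q = ((cross3 q b) \<bullet> (cross3 a b)) *\<^sub>R a + ((cross3 a q) \<bullet> (cross3 a b)) *\<^sub>R b + (q \<bullet> cross3 a b) *\<^sub>R cross3 a b"
  unfolding vec_eq_iff forall_3 by (simp add: cross3_def inner_vec_def sum_3 vector_def algebra_simps)

lemma decomp: fixes a b q :: "real^3"
  assumes "q \<bullet> cross3 a b = 0" "cross3 a b \<noteq> 0"
  shows "\<exists>\<alpha> \<beta>. q = \<alpha> *\<^sub>R a + \<beta> *\<^sub>R b"
proof -
  let ?N = "cross3 a b"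
  have nz: "?N \<bullet> ?N \<noteq> 0" using assms(2) by simp
  have "(?N \<bullet> ?N) *\<^sub>R q = ((cross3 q b) \<bullet> ?N) *\<^sub>R a + ((cross3 a q) \<bullet> ?N) *\<^sub>R b"
    using decomp_id[of a b q] assms(1) by simp
  hence "q = (((cross3 q b) \<bullet> ?N) / (?N \<bullet> ?N)) *\<^sub>R a + (((cross3 a q) \<bullet> ?N) / (?N \<bullet> ?N)) *\<^sub>R b"
    using nz by (metis (no_types, lifting) divide_inverse_commute scaleR_right_distrib scaleR_scaleR
        eq_vector_fraction_iff)
  thus ?thesis by blast
qed

lemma orth2: fixes x y :: "real^3"
  shows "\<exists>v. v \<noteq> 0 \<and> v \<bullet> x = 0 \<and> v \<bullet> y = 0"
proof -
  have "dim {x,y} \<le> card {x,y}" by (rule dim_le_card') simp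
  also have "\<dots> \<le> 2" by (simp add: card_insert_le_m1)
  finally have "dim {x,y} < DIM(real^3)" by simp
  then obtain v where "v \<noteq> 0" "\<And>z. z \<in> span {x,y} \<Longrightarrow> orthogonal v z"
    by (rule orthogonal_to_subspace_exists) blast
  thus ?thesis by (meson insertI1 insertI2 orthogonal_def span_base)
qed

lemma modinj1: fixes i d e n :: nat
  assumes "d \<le> e" "e < n" "(i+d) mod n = (i+e) mod n" shows "d = e"
proof -
  have "n dvd (i+e) - (i+d)" using assms(3) mod_eq_dvd_iff_nat[of "i+d" "i+e" n] assms(1) by simp
  hence "n dvd e - d" by simp
  moreover have "e - d < n" using assms by simp
  ultimately have "e - d = 0" using dvd_imp_le by (metis not_less gr0I)
  thus ?thesis using assms(1) by simp
qed

lemma modinj: fixes i d e n :: nat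
  assumes "d < n" "e < n" "(i+d) mod n = (i+e) mod n" shows "d = e"
  using modinj1[of d e n i] modinj1[of e d n i] assms by (cases "d \<le> e") auto

lemma modback: fixes i p n :: nat assumes "i < n" "p < n" shows "(i + (p + n - i) mod n) mod n = p"
  by (metis add_diff_inverse_nat assms(1,2) less_imp_add_positive
    mod_add_right_eq mod_add_self2 mod_if not_add_less2 trans_less_add1)

lemma ivt_disc: fixes g :: "nat \<Rightarrow> real"
  assumes "\<forall>e. lo \<le> e \<and> e \<le> hi \<longrightarrow> g e \<noteq> 0" "lo \<le> e'" "e' \<le> hi" "g lo * g e' < 0"
  shows "\<exists>d. lo \<le> d \<and> d < hi \<and> g d * g (Suc d) < 0"
  using assms(2-4)
proof (induction e')
  case 0
  then show ?case by (simp add: mult_less_0_iff)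
next
  case (Suc m)
  show ?case
  proof (cases "lo \<le> m")
    case False
    hence "lo = Suc m" using Suc.prems by simp
    then show ?thesis using Suc.prems by (simp add: mult_less_0_iff)
  next
    case True
    show ?thesis
    proof (cases "g lo * g m < 0")
      case True
      then show ?thesis using Suc \<open>lo \<le> m\<close> by simp
    next
      case False
      have "g m \<noteq> 0" "g lo \<noteq> 0" using assms(1) True Suc.prems by auto
      hence "g m * g (Suc m) < 0" using False Suc.prems(3)
        by (auto simp: mult_less_0_iff not_less)
      then show ?thesis using True Suc.prems by auto
    qed
  qed
qed


lemma core:
  fixes w :: "nat \<Rightarrow> real^3" and n :: nat and v1 v2 :: "real^3"
  assumes n4: "n \<ge> 4"
    and gp: "\<And>e1 e2 e3 c c'. e1 < n \<Longrightarrow> e2 < n \<Longrightarrow> e3 < n \<Longrightarrow> e1 \<noteq> e2 \<Longrightarrow> e2 \<noteq> e3 \<Longrightarrow> e1 \<noteq> e3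
        \<Longrightarrow> w e3 = c *\<^sub>R w e1 + c' *\<^sub>R w e2 \<Longrightarrow> False"
    and nrm: "\<And>e. e < n \<Longrightarrow> norm (w e) = 1"
    and h1: "\<And>e. e < n \<Longrightarrow> w e \<noteq> w 0 \<Longrightarrow> v1 \<bullet> w e \<ge> 0" and h1': "v1 \<bullet> w 0 < 0"
    and h2: "\<And>e. e < n \<Longrightarrow> w e \<noteq> w 1 \<Longrightarrow> v2 \<bullet> w e \<ge> 0" and h2': "v2 \<bullet> w 1 < 0"
    and bal: "\<And>N. N \<noteq> 0 \<Longrightarrow> \<exists>e<n. N \<bullet> w e < 0"
    and noself: "\<And>d. 2 \<le> d \<Longrightarrow> d + 1 < n \<Longrightarrow> sph_arc (w 0) (w 1) \<inter> sph_arc (w d) (w (d+1)) = {}"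
    and noanti: "\<And>d. 2 \<le> d \<Longrightarrow> d + 1 < n \<Longrightarrow> sph_arc (w d) (w (d+1)) \<inter> uminus ` sph_arc (w 0) (w 1) = {}"
  shows False
proof -
  have dist: "w e \<noteq> w e'" if "e < n" "e' < n" "e \<noteq> e'" for e e'
  proof
    assume eq: "w e = w e'"
    have "\<exists>e3<n. e3 \<noteq> e \<and> e3 \<noteq> e'"
      using n4 that(3) by (intro exI[of _ "if 0 \<noteq> e \<and> 0 \<noteq> e' then 0 else if 1 \<noteq> e \<and> 1 \<noteq> e' then 1 else 2"]) auto
    then obtain e3 where e3: "e3 < n" "e3 \<noteq> e" "e3 \<noteq> e'" by blast
    show False using gp[of e e3 e' 1 0] eq e3 that by auto
  qed
  define N where "N = cross3 (w 0) (w 1)"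
  have N0: "N \<noteq> 0"
  proof
    assume "N = 0"
    hence "collinear {0, w 0, w 1}" unfolding N_def by (simp add: cross_eq_0)
    hence "w 0 = 0 \<or> w 1 = 0 \<or> (\<exists>c. w 1 = c *\<^sub>R w 0)" by (simp add: collinear_lemma)
    moreover have "w 0 \<noteq> 0" "w 1 \<noteq> 0" using nrm[of 0] nrm[of 1] n4 by auto
    ultimately obtain c where "w 1 = c *\<^sub>R w 0 + 0 *\<^sub>R w 2" by auto
    thus False using gp[of 0 2 1 c 0] n4 by auto
  qed
  define f where "f e = N \<bullet> w e" for e
  have f01: "f 0 = 0" "f 1 = 0" unfolding f_def N_def by (simp_all add: dot_cross_self)
  have fnz: "f e \<noteq> 0" if "2 \<le> e" "e < n" for e
  proof
    assume "f e = 0"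
    hence "w e \<bullet> N = 0" unfolding f_def by (simp add: inner_commute)
    then obtain \<alpha> \<beta> where "w e = \<alpha> *\<^sub>R w 0 + \<beta> *\<^sub>R w 1" using decomp N0 unfolding N_def by blast
    thus False using gp[of 0 1 e \<alpha> \<beta>] that by auto
  qed
  obtain e1 where e1: "e1 < n" "f e1 < 0" using bal[OF N0] unfolding f_def by blast
  obtain e2 where e2: "e2 < n" "f e2 > 0" using bal[of "-N"] N0 unfolding f_def by auto
  have e12: "2 \<le> e1" "2 \<le> e2" using e1 e2 f01
    by (metis One_nat_def less_2_cases_iff not_le less_irrefl)+
  have fnz': "\<forall>e. 2 \<le> e \<and> e \<le> n - 1 \<longrightarrow> f e \<noteq> 0" using fnz n4 by auto
  obtain d where d: "2 \<le> d" "d < n - 1" "f d * f (Suc d) < 0"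
  proof (cases "f 2 < 0")
    case True
    have "f 2 * f e2 < 0" using True e2 by (simp add: mult_neg_pos)
    moreover have "e2 \<le> n - 1" using e2 by simp
    ultimately show ?thesis using ivt_disc[OF fnz', of e2] e12 that by auto
  next
    case False
    hence "f 2 > 0" using fnz[of 2] n4 by auto
    have "f 2 * f e1 < 0" using \<open>f 2 > 0\<close> e1 by (simp add: mult_pos_neg)
    moreover have "e1 \<le> n - 1" using e1 by simp
    ultimately show ?thesis using ivt_disc[OF fnz', of e1] e12 that by auto
  qed
  define x where "x = w d"
  define y where "y = w (Suc d)"
  define s where "s = \<bar>f (Suc d)\<bar>"
  define t where "t = \<bar>f d\<bar>"
  define q where "q = s *\<^sub>R x + t *\<^sub>R y"
  have st: "s > 0" "t > 0" using d(3) unfolding s_def t_def by (auto simp: mult_less_0_iff)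
  have Nq: "q \<bullet> N = 0"
  proof -
    have "q \<bullet> N = s * f d + t * f (Suc d)"
      unfolding q_def f_def x_def y_def by (simp add: inner_commute[of _ N] inner_add_right)
    also have "\<dots> = 0" using d(3) unfolding s_def t_def by (auto simp: mult_less_0_iff)
    finally show ?thesis .
  qed
  have q0: "q \<noteq> 0"
  proof
    assume "q = 0"
    hence e: "s *\<^sub>R w d = - (t *\<^sub>R w (Suc d))"
      unfolding q_def x_def y_def by (simp add: eq_neg_iff_add_eq_0)
    have "w d = (1 / s) *\<^sub>R (s *\<^sub>R w d)" using st by simp
    also have "\<dots> = (- t / s) *\<^sub>R w (Suc d)" unfolding e by simp
    finally have "w d = (- t / s) *\<^sub>R w (Suc d) + 0 *\<^sub>R w 0" by simp
    moreover have "Suc d < n" using d(2) by linarith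
    ultimately show False using gp[of "Suc d" 0 d "- t / s" 0] d(1) by simp
  qed
  obtain \<alpha> \<beta> where ab: "q = \<alpha> *\<^sub>R w 0 + \<beta> *\<^sub>R w 1"
    using decomp[OF Nq[unfolded N_def]] N0 unfolding N_def by blast
  have dn: "d < n" "Suc d < n" "d \<noteq> 0" "d \<noteq> 1" "Suc d \<noteq> 0" "Suc d \<noteq> 1" using d by auto
  have v1q: "v1 \<bullet> q \<ge> 0"
  proof -
    have "v1 \<bullet> x \<ge> 0" "v1 \<bullet> y \<ge> 0" unfolding x_def y_def
      using h1 dist dn by auto
    thus ?thesis unfolding q_def using st by (simp add: inner_add_right)
  qed
  have v2q: "v2 \<bullet> q \<ge> 0"
  proof -
    have "v2 \<bullet> x \<ge> 0" "v2 \<bullet> y \<ge> 0" unfolding x_def y_def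
      using h2 dist dn by auto
    thus ?thesis unfolding q_def using st by (simp add: inner_add_right)
  qed
  have v1b: "v1 \<bullet> w 1 \<ge> 0" using h1[of 1] dist[of 1 0] n4 by auto
  have v2a: "v2 \<bullet> w 0 \<ge> 0" using h2[of 0] dist[of 0 1] n4 by auto
  define z where "z = (1 / norm q) *\<^sub>R q"
  have nz: "norm z = 1" using q0 unfolding z_def by simp
  have nqpos: "norm q > 0" using q0 by simp
  have zxy: "z \<in> sph_arc x y"
  proof -
    have "z = (s / norm q) *\<^sub>R x + (t / norm q) *\<^sub>R y"
      unfolding z_def q_def by (simp add: scaleR_add_right)
    moreover have "s / norm q \<ge> 0" "t / norm q \<ge> 0" using st nqpos by auto
    ultimately show ?thesis unfolding sph_arc_def using nz by blast
  qed
  consider "\<alpha> \<ge> 0" "\<beta> \<ge> 0" | "\<alpha> < 0" "\<beta> < 0" | "\<alpha> \<ge> 0" "\<beta> < 0" | "\<alpha> < 0" "\<beta> \<ge> 0" by linarith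
  then show False
  proof cases
    case 1
    have "z \<in> sph_arc (w 0) (w 1)"
    proof -
      have "z = (\<alpha> / norm q) *\<^sub>R w 0 + (\<beta> / norm q) *\<^sub>R w 1"
        unfolding z_def ab by (simp add: scaleR_add_right)
      moreover have "\<alpha> / norm q \<ge> 0" "\<beta> / norm q \<ge> 0" using 1 nqpos by auto
      ultimately show ?thesis unfolding sph_arc_def using nz by blast
    qed
    then show False using noself[of d] zxy dn d unfolding x_def y_def by auto
  next
    case 2
    have "-z \<in> sph_arc (w 0) (w 1)"
    proof -
      have "-z = (- \<alpha> / norm q) *\<^sub>R w 0 + (- \<beta> / norm q) *\<^sub>R w 1"
        unfolding z_def ab by (simp add: scaleR_add_right)
      moreover have "- \<alpha> / norm q \<ge> 0" "- \<beta> / norm q \<ge> 0" using 2 nqpos by (simp_all add: divide_nonpos_pos)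
      moreover have "norm (-z) = 1" using nz by simp
      ultimately show ?thesis unfolding sph_arc_def by blast
    qed
    hence "z \<in> uminus ` sph_arc (w 0) (w 1)" by (metis image_eqI minus_minus)
    then show False using noanti[of d] zxy dn d unfolding x_def y_def by auto
  next
    case 3
    have "v1 \<bullet> q = \<alpha> * (v1 \<bullet> w 0) + \<beta> * (v1 \<bullet> w 1)" unfolding ab by (simp add: inner_add_right)
    moreover have "\<alpha> * (v1 \<bullet> w 0) \<le> 0" using 3 h1' by (simp add: mult_nonneg_nonpos)
    moreover have "\<beta> * (v1 \<bullet> w 1) \<le> 0" using 3 v1b by (simp add: mult_nonpos_nonneg)
    ultimately have "\<alpha> * (v1 \<bullet> w 0) = 0" using v1q by linarith
    hence "\<alpha> = 0" using h1' by simp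
    hence "q = \<beta> *\<^sub>R w 1" using ab by simp
    hence qe: "\<beta> *\<^sub>R w 1 = q" by simp
    have "w 1 = (1 / \<beta>) *\<^sub>R (\<beta> *\<^sub>R w 1)" using 3 by simp
    also have "\<dots> = (s / \<beta>) *\<^sub>R w d + (t / \<beta>) *\<^sub>R w (Suc d)"
      unfolding qe q_def x_def y_def by (simp add: scaleR_add_right)
    finally have "w 1 = (s / \<beta>) *\<^sub>R w d + (t / \<beta>) *\<^sub>R w (Suc d)" .
    then show False using gp[of d "Suc d" 1] dn by auto
  next
    case 4
    have "v2 \<bullet> q = \<alpha> * (v2 \<bullet> w 0) + \<beta> * (v2 \<bullet> w 1)" unfolding ab by (simp add: inner_add_right)
    moreover have "\<alpha> * (v2 \<bullet> w 0) \<le> 0" using 4 v2a by (simp add: mult_nonpos_nonneg)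
    moreover have "\<beta> * (v2 \<bullet> w 1) \<le> 0" using 4 h2' by (simp add: mult_nonneg_nonpos)
    ultimately have "\<beta> * (v2 \<bullet> w 1) = 0" using v2q by linarith
    hence "\<beta> = 0" using h2' by simp
    hence "q = \<alpha> *\<^sub>R w 0" using ab by simp
    hence qe: "\<alpha> *\<^sub>R w 0 = q" by simp
    have "w 0 = (1 / \<alpha>) *\<^sub>R (\<alpha> *\<^sub>R w 0)" using 4 by simp
    also have "\<dots> = (s / \<alpha>) *\<^sub>R w d + (t / \<alpha>) *\<^sub>R w (Suc d)"
      unfolding qe q_def x_def y_def by (simp add: scaleR_add_right)
    finally have "w 0 = (s / \<alpha>) *\<^sub>R w d + (t / \<alpha>) *\<^sub>R w (Suc d)" .
    then show False using gp[of d "Suc d" 0] dn by auto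
  qed
qed


theorem lemma9:
  fixes u :: "nat \<Rightarrow> real^3" and n :: nat
  assumes "spherical_polygon u n"
    and "n \<ge> 6"
    and "balanced (vertex_set u n)"
    and "\<not> self_intersecting u n"
    and "\<not> antipodal_intersecting u n"
    and "card {m. essential u n m} = 2"
  shows "\<forall>i j. essential u n i \<and> essential u n j \<longrightarrow> j \<noteq> Suc i mod n"
proof (intro allI impI)
  fix i j assume ess: "essential u n i \<and> essential u n j"
  show "j \<noteq> Suc i mod n"
  proof
    assume jdef: "j = Suc i mod n"
    have n6: "n \<ge> 6" using assms(2) .
    have i_lt: "i < n" using ess unfolding essential_def by simp
    define w where "w e = u ((i+e) mod n)" for e
    have w0: "w 0 = u i" using i_lt unfolding w_def by simp
    have w1: "w 1 = u j" unfolding w_def jdef by simp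
    have idx: "(i+e) mod n < n" for e using n6 by simp
    have wV: "w e \<in> vertex_set u n" for e unfolding w_def vertex_set_def using idx by blast
    have unorm: "\<And>p. p < n \<Longrightarrow> norm (u p) = 1" using assms(1) unfolding spherical_polygon_def by blast
    have ugp: "\<And>p r m. p < n \<Longrightarrow> r < n \<Longrightarrow> m < n \<Longrightarrow> p \<noteq> r \<Longrightarrow> r \<noteq> m \<Longrightarrow> p \<noteq> m \<Longrightarrow>
        \<not> (\<exists>v. v \<noteq> 0 \<and> v \<bullet> u p = 0 \<and> v \<bullet> u r = 0 \<and> v \<bullet> u m = 0)"
      using assms(1) unfolding spherical_polygon_def by blast
    have gp: False if "e1 < n" "e2 < n" "e3 < n" "e1 \<noteq> e2" "e2 \<noteq> e3" "e1 \<noteq> e3"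
        "w e3 = c *\<^sub>R w e1 + c' *\<^sub>R w e2" for e1 e2 e3 c c'
    proof -
      obtain v where v: "v \<noteq> 0" "v \<bullet> w e1 = 0" "v \<bullet> w e2 = 0" using orth2 by blast
      have "v \<bullet> w e3 = 0" using that(7) v by (simp add: inner_add_right)
      moreover have "(i+e1) mod n \<noteq> (i+e2) mod n" "(i+e2) mod n \<noteq> (i+e3) mod n" "(i+e1) mod n \<noteq> (i+e3) mod n"
        using modinj[of e1 n e2 i] modinj[of e2 n e3 i] modinj[of e1 n e3 i] that by auto
      ultimately show False using ugp[OF idx idx idx] v unfolding w_def by blast
    qed
    have nrm: "norm (w e) = 1" for e unfolding w_def using unorm idx by blast
    have vsub: "\<And>z. z \<in> vertex_set u n \<Longrightarrow> \<exists>p<n. z = u p" unfolding vertex_set_def by blast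
    obtain v1 where v1: "v1 \<noteq> 0" "vertex_set u n - {u i} \<subseteq> closed_hemisphere v1"
      using ess unfolding essential_def balanced_def in_closed_hemisphere_def by blast
    obtain v2 where v2: "v2 \<noteq> 0" "vertex_set u n - {u j} \<subseteq> closed_hemisphere v2"
      using ess unfolding essential_def balanced_def in_closed_hemisphere_def by blast
    have notsub: "\<exists>z \<in> vertex_set u n. v \<bullet> z < 0" if "v \<noteq> 0" for v
    proof -
      have "\<not> vertex_set u n \<subseteq> closed_hemisphere v"
        using assms(3) that unfolding balanced_def in_closed_hemisphere_def by blast
      then obtain z where z: "z \<in> vertex_set u n" "z \<notin> closed_hemisphere v" by blast
      obtain p where "p < n" "z = u p" using vsub z(1) by blast
      hence "norm z = 1" using unorm by simp
      hence "\<not> v \<bullet> z \<ge> 0" using z(2) unfolding closed_hemisphere_def by simp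
      thus ?thesis using z(1) by (auto simp: not_le)
    qed
    have h1: "v1 \<bullet> w e \<ge> 0" if "w e \<noteq> w 0" for e
    proof -
      have "w e \<in> vertex_set u n - {u i}" using wV[of e] that w0 by simp
      hence "w e \<in> closed_hemisphere v1" using v1(2) by blast
      thus ?thesis unfolding closed_hemisphere_def by simp
    qed
    have h1': "v1 \<bullet> w 0 < 0"
    proof -
      obtain z where z: "z \<in> vertex_set u n" "v1 \<bullet> z < 0" using notsub v1(1) by blast
      have "z = u i"
      proof (rule ccontr)
        assume "z \<noteq> u i"
        hence "z \<in> closed_hemisphere v1" using z(1) v1(2) by blast
        thus False using z(2) unfolding closed_hemisphere_def by simp
      qed
      thus ?thesis using z w0 by simp
    qed
    have h2: "v2 \<bullet> w e \<ge> 0" if "w e \<noteq> w 1" for e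
    proof -
      have "w e \<in> vertex_set u n - {u j}" using wV[of e] that w1 by simp
      hence "w e \<in> closed_hemisphere v2" using v2(2) by blast
      thus ?thesis unfolding closed_hemisphere_def by simp
    qed
    have h2': "v2 \<bullet> w 1 < 0"
    proof -
      obtain z where z: "z \<in> vertex_set u n" "v2 \<bullet> z < 0" using notsub v2(1) by blast
      have "z = u j"
      proof (rule ccontr)
        assume "z \<noteq> u j"
        hence "z \<in> closed_hemisphere v2" using z(1) v2(2) by blast
        thus False using z(2) unfolding closed_hemisphere_def by simp
      qed
      thus ?thesis using z w1 by simp
    qed
    have bal: "\<exists>e<n. N \<bullet> w e < 0" if "N \<noteq> 0" for N
    proof -
      from notsub[OF that] obtain z where z: "z \<in> vertex_set u n" "N \<bullet> z < 0" by blast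
      from vsub[OF z(1)] obtain p where p: "p < n" "z = u p" by blast
      have "w ((p + n - i) mod n) = u p" unfolding w_def by (rule arg_cong[where f=u, OF modback[OF i_lt p(1)]])
      moreover have "(p + n - i) mod n < n" using n6 by simp
      ultimately show ?thesis using z(2) p(2) by metis
    qed
    have ei: "edge u n i = sph_arc (w 0) (w 1)" unfolding edge_def w0 w1 jdef using i_lt by simp
    have ek: "edge u n ((i+d) mod n) = sph_arc (w d) (w (d+1))" for d
      unfolding edge_def w_def by (simp add: mod_Suc_eq)
    have nadj: "nonadjacent_edges n i ((i+d) mod n) \<and> nonadjacent_edges n ((i+d) mod n) i"
      if "2 \<le> d" "d + 1 < n" for d
    proof -
      have a: "(i+d) mod n \<noteq> (i+0) mod n" "(i+d) mod n \<noteq> (i+1) mod n" "(i+0) mod n \<noteq> (i+(d+1)) mod n"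
        using modinj[of d n 0 i] modinj[of d n 1 i] modinj[of 0 n "d+1" i] that by auto
      have b: "Suc ((i+d) mod n) mod n = (i+(d+1)) mod n" by (simp add: mod_Suc_eq)
      have c: "Suc i mod n = (i+1) mod n" by simp
      have i0: "(i+0) mod n = i" using i_lt by (metis add_0_right mod_less)
      have k1: "(i+d) mod n \<noteq> i" using a(1) unfolding i0 .
      have k1': "i \<noteq> (i+d) mod n" using k1 by (rule not_sym)
      have k2: "(i+d) mod n \<noteq> Suc i mod n" unfolding c by (rule a(2))
      have k3: "i \<noteq> Suc ((i+d) mod n) mod n" unfolding b using a(3) unfolding i0 .
      show ?thesis unfolding nonadjacent_edges_def using k1 k1' k2 k3 i_lt idx[of d] by blast
    qed
    have noself: "sph_arc (w 0) (w 1) \<inter> sph_arc (w d) (w (d+1)) = {}" if "2 \<le> d" "d + 1 < n" for d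
    proof -
      have "edge u n i \<inter> edge u n ((i+d) mod n) = {}"
        using assms(4) nadj[OF that] unfolding self_intersecting_def by blast
      thus ?thesis using ei ek[of d] by simp
    qed
    have noanti: "sph_arc (w d) (w (d+1)) \<inter> uminus ` sph_arc (w 0) (w 1) = {}" if "2 \<le> d" "d + 1 < n" for d
    proof -
      have "edge u n ((i+d) mod n) \<inter> uminus ` edge u n i = {}"
        using assms(5) nadj[OF that] unfolding antipodal_intersecting_def by blast
      thus ?thesis using ei ek[of d] by simp
    qed
    have n4: "n \<ge> 4" using n6 by simp
    show False
    proof (rule core[of n w v1 v2])
      show "n \<ge> 4" by (rule n4)
      show "\<And>e1 e2 e3 c c'. e1 < n \<Longrightarrow> e2 < n \<Longrightarrow> e3 < n \<Longrightarrow> e1 \<noteq> e2 \<Longrightarrow> e2 \<noteq> e3 \<Longrightarrow> e1 \<noteq> e3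
        \<Longrightarrow> w e3 = c *\<^sub>R w e1 + c' *\<^sub>R w e2 \<Longrightarrow> False" by (rule gp)
      show "\<And>e. e < n \<Longrightarrow> norm (w e) = 1" by (rule nrm)
      show "\<And>e. e < n \<Longrightarrow> w e \<noteq> w 0 \<Longrightarrow> v1 \<bullet> w e \<ge> 0" by (rule h1)
      show "v1 \<bullet> w 0 < 0" by (rule h1')
      show "\<And>e. e < n \<Longrightarrow> w e \<noteq> w 1 \<Longrightarrow> v2 \<bullet> w e \<ge> 0" by (rule h2)
      show "v2 \<bullet> w 1 < 0" by (rule h2')
      show "\<And>N. N \<noteq> 0 \<Longrightarrow> \<exists>e<n. N \<bullet> w e < 0" by (rule bal)
      show "\<And>d. 2 \<le> d \<Longrightarrow> d + 1 < n \<Longrightarrow> sph_arc (w 0) (w 1) \<inter> sph_arc (w d) (w (d+1)) = {}" by (rule noself)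
      show "\<And>d. 2 \<le> d \<Longrightarrow> d + 1 < n \<Longrightarrow> sph_arc (w d) (w (d+1)) \<inter> uminus ` sph_arc (w 0) (w 1) = {}" by (rule noanti)
    qed
  qed
qed

end
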